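(* Let $M < N$ be positive integers. Define $\gamma_{N,M} : (\mathbb{R}^N \setminus \{\mathbf{0}\})^M \to \mathbb{R}^{N\times M}$ as follows: for nonzero $v^{(1)}, \dots, v^{(M)} \in \mathbb{R}^N$ let $U = \begin{bmatrix} v^{(1)}/\|v^{(1)}\|_2 & \cdots & v^{(M)}/\|v^{(M)}\|_2 \end{bmatrix} \in \mathbb{R}^{N\times M}$, let $U_1 \in \mathbb{R}^{M\times M}$ be the submatrix formed by the first $M$ rows of $U$, let $S = \tfrac12 I + \mathrm{striu}(U^\top U)$, and set $$\gamma_{N,M}(v^{(1)}, \dots, v^{(M)}) = \begin{bmatrix} I_M \\ \mathbf{0} \end{bmatrix} - U S^{-1} U_1^\top \in \mathbb{R}^{N\times M},$$ where $\begin{bmatrix} I_M \\ \mathbf{0}\end{bmatrix}\in\mathbb{R}^{N\times M}$ consists of the $M\times M$ identity on top of an $(N-M)\times M$ zero block. Then $S$ is always invertible, $\gamma_{N,M}$ takes values in the Stiefel manifold $\mathrm{St}(N,M)$, and $\gamma_{N,M}$ is surjective onto $\mathrm{St}(N,M)$.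
   Context: $\mathrm{St}(N,M) = \{\Omega \in \mathbb{R}^{N\times M} : \Omega^\top \Omega = I_M\}$. For a square matrix $X$, $\mathrm{striu}(X)$ denotes the strictly upper-triangular part of $X$ (all diagonal and below-diagonal entries set to zero). *)

theory Defs
  imports "Jordan_Normal_Form.Matrix"
begin

text \<open>Matrices are Jordan_Normal_Form matrices (dimensions are values).
  An M-tuple of vectors in R^N is a function v :: nat => real vec, of which
  only the entries v 0, ..., v (M-1) are relevant.\<close>

definition stiefel :: "nat \<Rightarrow> nat \<Rightarrow> real mat set" where
  "stiefel N M = {\<Omega> \<in> carrier_mat N M. transpose_mat \<Omega> * \<Omega> = 1\<^sub>m M}"

definition striu :: "real mat \<Rightarrow> real mat" where
  "striu X = mat (dim_row X) (dim_col X) (\<lambda>(i,j). if i < j then X $$ (i,j) else 0)"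

definition inv_mat :: "real mat \<Rightarrow> real mat" where
  "inv_mat A = (SOME B. B \<in> carrier_mat (dim_row A) (dim_row A) \<and> inverts_mat A B \<and> inverts_mat B A)"

definition vnorm :: "real vec \<Rightarrow> real" where
  "vnorm x = sqrt (x \<bullet> x)"

definition valid_tuple :: "nat \<Rightarrow> nat \<Rightarrow> (nat \<Rightarrow> real vec) \<Rightarrow> bool" where
  "valid_tuple N M v \<longleftrightarrow> (\<forall>j<M. v j \<in> carrier_vec N \<and> v j \<noteq> 0\<^sub>v N)"

definition Umat :: "nat \<Rightarrow> nat \<Rightarrow> (nat \<Rightarrow> real vec) \<Rightarrow> real mat" where
  "Umat N M v = mat N M (\<lambda>(i,j). (v j $ i) / vnorm (v j))"

definition U1mat :: "nat \<Rightarrow> nat \<Rightarrow> (nat \<Rightarrow> real vec) \<Rightarrow> real mat" where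
  "U1mat N M v = mat M M (\<lambda>(i,j). Umat N M v $$ (i,j))"

definition Smat :: "nat \<Rightarrow> nat \<Rightarrow> (nat \<Rightarrow> real vec) \<Rightarrow> real mat" where
  "Smat N M v = (1/2) \<cdot>\<^sub>m 1\<^sub>m M + striu (transpose_mat (Umat N M v) * Umat N M v)"

definition gamma :: "nat \<Rightarrow> nat \<Rightarrow> (nat \<Rightarrow> real vec) \<Rightarrow> real mat" where
  "gamma N M v = (1\<^sub>m M @\<^sub>r 0\<^sub>m (N - M) M)
     - Umat N M v * inv_mat (Smat N M v) * transpose_mat (U1mat N M v)"

end

theory Submission
  imports Defs "Jordan_Normal_Form.Determinant"
begin

definition hh :: "nat \<Rightarrow> real vec \<Rightarrow> real mat" where
  "hh N w = mat N N (\<lambda>(a,b). (if a = b then 1 else 0) - 2 * (w$a) * (w$b))"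

fun Qr :: "nat \<Rightarrow> (nat \<Rightarrow> real vec) \<Rightarrow> nat \<Rightarrow> real mat" where
  "Qr N u 0 = 1\<^sub>m N"
| "Qr N u (Suc m) = Qr N u m * hh N (u m)"

fun Zf :: "nat \<Rightarrow> (nat \<Rightarrow> real vec) \<Rightarrow> nat \<Rightarrow> nat \<Rightarrow> nat \<Rightarrow> real" where
  "Zf N u 0 j b = 0"
| "Zf N u (Suc m) j b = (if j < m then Zf N u m j b - 2 * (\<Sum>c<N. Zf N u m j c * (u m $ c)) * (u m $ b)
      else 2 * (u m $ b))"

lemma Qr_carrier: "Qr N u m \<in> carrier_mat N N"
  by (induction m) (auto simp: hh_def)

lemma Qr_index:
  assumes "a < N" "b < N"
  shows "Qr N u m $$ (a,b) = (if a = b then 1 else 0) - (\<Sum>j<m. (u j $ a) * Zf N u m j b)"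
  using assms
proof (induction m arbitrary: b)
  case 0
  then show ?case by simp
next
  case (Suc m)
  let ?w = "u m"
  have "Qr N u (Suc m) $$ (a,b) = (\<Sum>c<N. Qr N u m $$ (a,c) * hh N ?w $$ (c,b))"
    using Suc.prems Qr_carrier[of N u m]
    by (simp add: scalar_prod_def hh_def lessThan_atLeast0 carrier_matD)
  also have "\<dots> = (\<Sum>c<N. ((if a = c then 1 else 0) - (\<Sum>j<m. (u j $ a) * Zf N u m j c))
                      * ((if c = b then 1 else 0) - 2 * (?w$c) * (?w$b)))"
    using Suc by (intro sum.cong) (auto simp: hh_def)
  also have "\<dots> = (\<Sum>c<N. (if c = a then (if c = b then 1 else 0) else 0))
       - (\<Sum>c<N. (if c = a then 2 * (?w$c) * (?w$b) else 0))
       - (\<Sum>c<N. (if c = b then (\<Sum>j<m. (u j $ a) * Zf N u m j c) else 0))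
       + (\<Sum>c<N. (\<Sum>j<m. (u j $ a) * Zf N u m j c) * (2 * (?w$c) * (?w$b)))"
  proof -
    have "\<And>c. ((if a = c then 1 else 0) - (\<Sum>j<m. (u j $ a) * Zf N u m j c))
                      * ((if c = b then 1 else 0) - 2 * (?w$c) * (?w$b)) =
      (if c = a then (if c = b then 1 else 0) else 0)
       - (if c = a then 2 * (?w$c) * (?w$b) else 0)
       - (if c = b then (\<Sum>j<m. (u j $ a) * Zf N u m j c) else 0)
       + (\<Sum>j<m. (u j $ a) * Zf N u m j c) * (2 * (?w$c) * (?w$b))"
      by (auto simp: algebra_simps)
    then show ?thesis by (simp only: sum.distrib sum_subtractf)
  qed
  also have "\<dots> = (if a = b then 1 else 0) - 2 * (?w$a) * (?w$b)
      - (\<Sum>j<m. (u j $ a) * Zf N u m j b)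
      + 2 * (\<Sum>j<m. (u j $ a) * (\<Sum>c<N. Zf N u m j c * (?w $ c))) * (?w$b)"
  proof -
    have "(\<Sum>c<N. (\<Sum>j<m. (u j $ a) * Zf N u m j c) * (2 * (?w$c) * (?w$b)))
       = 2 * (\<Sum>j<m. (u j $ a) * (\<Sum>c<N. Zf N u m j c * (?w $ c))) * (?w$b)"
      by (simp add: sum_distrib_left sum_distrib_right sum.swap[of _ "{..<N}" "{..<m}"] algebra_simps)
    then show ?thesis using Suc.prems by (simp add: sum.delta)
  qed
  also have "\<dots> = (if a = b then 1 else 0) - (\<Sum>j<Suc m. (u j $ a) * Zf N u (Suc m) j b)"
    by (simp add: algebra_simps sum.distrib sum_subtractf sum_distrib_left sum_distrib_right)
  finally show ?case .
qed

lemma Zf_S: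
  assumes "j < m"
  shows "(1/2) * Zf N u m j b + (\<Sum>l\<in>{j<..<m}. (\<Sum>c<N. u j $ c * u l $ c) * Zf N u m l b) = u j $ b"
  using assms
proof (induction m arbitrary: j b)
  case 0
  then show ?case by simp
next
  case (Suc m)
  let ?w = "u m"
  let ?g = "\<lambda>l. (\<Sum>c<N. u j $ c * u l $ c)"
  let ?W = "\<lambda>l. (\<Sum>c<N. Zf N u m l c * (?w $ c))"
  show ?case
  proof (cases "j = m")
    case True
    have "{m<..<Suc m} = {}" by auto
    with True show ?thesis by simp
  next
    case False
    with Suc.prems have jm: "j < m" by simp
    have split: "{j<..<Suc m} = insert m {j<..<m}" using jm by auto
    have "(\<Sum>l\<in>{j<..<Suc m}. ?g l * Zf N u (Suc m) l b)
       = ?g m * (2 * ?w $ b) + (\<Sum>l\<in>{j<..<m}. ?g l * (Zf N u m l b - 2 * ?W l * ?w $ b))"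
      unfolding split by (subst sum.insert) auto
    also have "\<dots> = ?g m * (2 * ?w $ b) + (\<Sum>l\<in>{j<..<m}. ?g l * Zf N u m l b)
        - 2 * (?w $ b) * (\<Sum>l\<in>{j<..<m}. ?g l * ?W l)"
      by (simp add: algebra_simps sum_subtractf sum_distrib_left)
    finally have e1: "(\<Sum>l\<in>{j<..<Suc m}. ?g l * Zf N u (Suc m) l b) = \<dots>" .
    have IH: "\<And>c. (1/2) * Zf N u m j c + (\<Sum>l\<in>{j<..<m}. ?g l * Zf N u m l c) = u j $ c"
      using Suc.IH[OF jm] .
    have "?W j + 2 * (\<Sum>l\<in>{j<..<m}. ?g l * ?W l)
       = (\<Sum>c<N. 2 * ((1/2) * Zf N u m j c + (\<Sum>l\<in>{j<..<m}. ?g l * Zf N u m l c)) * ?w $ c)"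
      by (simp add: algebra_simps sum.distrib sum_distrib_left sum_distrib_right
          sum.swap[of _ "{j<..<m}" "{..<N}"])
    also have "\<dots> = 2 * ?g m"
      unfolding IH by (simp add: sum_distrib_left algebra_simps)
    finally have e2: "?W j + 2 * (\<Sum>l\<in>{j<..<m}. ?g l * ?W l) = 2 * ?g m" .
    have "(1/2) * Zf N u (Suc m) j b = (1/2) * Zf N u m j b - ?W j * ?w $ b"
      using jm by simp
    then have "(1/2) * Zf N u (Suc m) j b + (\<Sum>l\<in>{j<..<Suc m}. ?g l * Zf N u (Suc m) l b)
      = ((1/2) * Zf N u m j b + (\<Sum>l\<in>{j<..<m}. ?g l * Zf N u m l b))
        + ?w $ b * (2 * ?g m - (?W j + 2 * (\<Sum>l\<in>{j<..<m}. ?g l * ?W l)))"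
      unfolding e1 by (simp add: algebra_simps)
    also have "\<dots> = u j $ b" using IH e2 by simp
    finally show ?thesis .
  qed
qed

definition nu :: "nat \<Rightarrow> (nat \<Rightarrow> real vec) \<Rightarrow> nat \<Rightarrow> real vec" where
  "nu N v j = vec N (\<lambda>i. v j $ i / vnorm (v j))"

lemma Umat_carrier: "Umat N M v \<in> carrier_mat N M" by (simp add: Umat_def)
lemma U1mat_carrier: "U1mat N M v \<in> carrier_mat M M" by (simp add: U1mat_def)
lemma Smat_carrier: "Smat N M v \<in> carrier_mat M M" by (simp add: Smat_def striu_def Umat_def)

lemma Umat_index: "i < N \<Longrightarrow> j < M \<Longrightarrow> Umat N M v $$ (i,j) = nu N v j $ i"
  by (simp add: Umat_def nu_def)

lemma Smat_index:
  assumes "i < M" "j < M"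
  shows "Smat N M v $$ (i,j) = (if i = j then 1/2 else 0)
     + (if i < j then (\<Sum>c<N. nu N v i $ c * nu N v j $ c) else 0)"
  using assms
  by (simp add: Smat_def striu_def Umat_def nu_def scalar_prod_def lessThan_atLeast0)

lemma Smat_det: "det (Smat N M v) = (1/2)^M"
proof -
  have "upper_triangular (Smat N M v)"
    unfolding upper_triangular_def using Smat_carrier[of N M v]
    by (auto simp: Smat_index carrier_matD)
  then have "det (Smat N M v) = prod_list (diag_mat (Smat N M v))"
    using det_upper_triangular Smat_carrier by blast
  also have "diag_mat (Smat N M v) = replicate M (1/2)"
    using Smat_carrier[of N M v]
    by (intro nth_equalityI) (auto simp: diag_mat_def Smat_index carrier_matD)
  finally show ?thesis by simp
qed

lemma Smat_inv:
  shows "invertible_mat (Smat N M v) \<and> inv_mat (Smat N M v) \<in> carrier_mat M M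
     \<and> inv_mat (Smat N M v) * Smat N M v = 1\<^sub>m M"
proof -
  let ?S = "Smat N M v"
  have "?S \<in> Units (ring_mat TYPE(real) M M)"
    by (rule det_non_zero_imp_unit[OF Smat_carrier]) (simp add: Smat_det)
  then obtain B where B: "B \<in> carrier_mat M M" "?S * B = 1\<^sub>m M" "B * ?S = 1\<^sub>m M"
    unfolding Units_def ring_mat_def by auto
  have ex: "\<exists>B. B \<in> carrier_mat (dim_row ?S) (dim_row ?S) \<and> inverts_mat ?S B \<and> inverts_mat B ?S"
    using B Smat_carrier[of N M v] by (auto simp: inverts_mat_def carrier_matD)
  have inv: "invertible_mat ?S"
    using B Smat_carrier[of N M v] unfolding invertible_mat_def inverts_mat_def
    by (auto simp: carrier_matD)
  from someI_ex[OF ex] have "inv_mat ?S \<in> carrier_mat (dim_row ?S) (dim_row ?S) \<and> inverts_mat (inv_mat ?S) ?S"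
    unfolding inv_mat_def by blast
  then have "inv_mat ?S \<in> carrier_mat M M \<and> inv_mat ?S * ?S = 1\<^sub>m M"
    unfolding inverts_mat_def using Smat_carrier[of N M v]
    by (auto simp: carrier_matD)
  with inv show ?thesis by blast
qed

lemma SY:
  assumes MN: "M \<le> N"
  shows "Smat N M v * mat M M (\<lambda>(j,k). Zf N (nu N v) M j k) = transpose_mat (U1mat N M v)"
proof (rule eq_matI)
  let ?u = "nu N v"
  let ?Z = "Zf N ?u M"
  fix j k assume j: "j < dim_row (transpose_mat (U1mat N M v))" and k: "k < dim_col (transpose_mat (U1mat N M v))"
  then have jM: "j < M" and kM: "k < M" by (auto simp: U1mat_def)
  have "{..<M} \<inter> Collect ((<) j) = {j<..<M}" by auto
  have "(Smat N M v * mat M M (\<lambda>(j,k). ?Z j k)) $$ (j,k)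
     = (\<Sum>l<M. Smat N M v $$ (j,l) * ?Z l k)"
    using jM kM Smat_carrier[of N M v]
    by (simp add: scalar_prod_def lessThan_atLeast0 carrier_matD)
  also have "\<dots> = (\<Sum>l<M. (if l = j then (1/2) * ?Z j k else 0)
       + (if l \<in> {j<..<M} then (\<Sum>c<N. ?u j $ c * ?u l $ c) * ?Z l k else 0))"
    using jM by (intro sum.cong) (auto simp: Smat_index)
  also have "\<dots> = (1/2) * ?Z j k + (\<Sum>l\<in>{j<..<M}. (\<Sum>c<N. ?u j $ c * ?u l $ c) * ?Z l k)"
    using jM by (simp add: sum.distrib sum.If_cases Int_absorb1 subset_eq
       \<open>{..<M} \<inter> Collect ((<) j) = {j<..<M}\<close>)
  also have "\<dots> = ?u j $ k" by (rule Zf_S[OF jM])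
  also have "\<dots> = transpose_mat (U1mat N M v) $$ (j,k)"
    using jM kM MN by (simp add: U1mat_def Umat_def nu_def)
  finally show "(Smat N M v * mat M M (\<lambda>(j,k). ?Z j k)) $$ (j,k) = transpose_mat (U1mat N M v) $$ (j,k)" .
qed (auto simp: U1mat_def Smat_def Umat_def striu_def)

lemma gamma_eq:
  assumes MN: "M \<le> N"
  shows "gamma N M v = mat N M (\<lambda>(a,k). Qr N (nu N v) M $$ (a,k))"
proof -
  let ?S = "Smat N M v"
  let ?T = "inv_mat ?S"
  let ?Y = "mat M M (\<lambda>(j,k). Zf N (nu N v) M j k)"
  let ?U = "Umat N M v"
  have T: "?T \<in> carrier_mat M M" "?T * ?S = 1\<^sub>m M" using Smat_inv by blast+
  have Y: "?Y \<in> carrier_mat M M" by simp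
  have "?T * transpose_mat (U1mat N M v) = ?T * (?S * ?Y)" using SY[OF MN] by simp
  also have "\<dots> = (?T * ?S) * ?Y" using assoc_mult_mat[OF T(1) Smat_carrier Y] by simp
  also have "\<dots> = ?Y" using T Y by simp
  finally have TY: "?T * transpose_mat (U1mat N M v) = ?Y" .
  have "?U * ?T * transpose_mat (U1mat N M v) = ?U * ?Y"
    using T Umat_carrier[of N M v] U1mat_carrier[of N M v] TY by simp
  then have g: "gamma N M v = (1\<^sub>m M @\<^sub>r 0\<^sub>m (N - M) M) - ?U * ?Y"
    by (simp add: gamma_def)
  show ?thesis
  proof (rule eq_matI)
    fix a k assume a: "a < dim_row (mat N M (\<lambda>(a,k). Qr N (nu N v) M $$ (a,k)))"
      and k: "k < dim_col (mat N M (\<lambda>(a,k). Qr N (nu N v) M $$ (a,k)))"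
    then have aN: "a < N" and kM: "k < M" by auto
    have E: "(1\<^sub>m M @\<^sub>r 0\<^sub>m (N - M) M) $$ (a,k) = (if a = k then 1 else 0)"
      using aN kM MN by (auto simp: append_rows_def)
    have UY: "(?U * ?Y) $$ (a,k) = (\<Sum>j<M. (nu N v j $ a) * Zf N (nu N v) M j k)"
      using aN kM by (simp add: scalar_prod_def lessThan_atLeast0 Umat_def nu_def)
    show "gamma N M v $$ (a,k) = mat N M (\<lambda>(a,k). Qr N (nu N v) M $$ (a,k)) $$ (a,k)"
      unfolding g using aN kM MN E UY Qr_index[of a N k "nu N v" M]
      by (simp add: Umat_def)
  qed (auto simp: gamma_def Umat_def U1mat_def)
qed

definition unitv :: "nat \<Rightarrow> real vec \<Rightarrow> bool" where
  "unitv N w \<longleftrightarrow> w \<in> carrier_vec N \<and> (\<Sum>c<N. w $ c * w $ c) = 1"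

lemma hh_carrier: "hh N w \<in> carrier_mat N N" by (simp add: hh_def)

lemma hh_sym: "transpose_mat (hh N w) = hh N w"
  by (rule eq_matI) (auto simp: hh_def)

lemma hh_sq:
  assumes "unitv N w"
  shows "hh N w * hh N w = 1\<^sub>m N"
proof (rule eq_matI)
  fix a b assume "a < dim_row (1\<^sub>m N :: real mat)" "b < dim_col (1\<^sub>m N :: real mat)"
  then have a: "a < N" and b: "b < N" by auto
  have "(hh N w * hh N w) $$ (a,b) = (\<Sum>c<N. ((if a = c then 1 else 0) - 2 * w$a * w$c)
        * ((if c = b then 1 else 0) - 2 * w$c * w$b))"
    using a b by (simp add: hh_def scalar_prod_def lessThan_atLeast0)
  also have "\<dots> = (\<Sum>c<N. (if c = a then (if c = b then 1 else 0) else 0)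
       - (if c = a then 2 * (w$c) * (w$b) else 0)
       - (if c = b then 2 * w$a * w$c else 0)
       + 4 * w$a * w$b * (w $ c * w $ c))"
    by (intro sum.cong) (auto simp: algebra_simps)
  also have "\<dots> = (if a = b then 1 else 0) - 2 * (w$a) * (w$b) - 2 * (w$a) * (w$b)
       + 4 * w$a * w$b * (\<Sum>c<N. w $ c * w $ c)"
    using a b by (simp add: sum.distrib sum_subtractf sum_distrib_left sum.delta)
  also have "\<dots> = 1\<^sub>m N $$ (a,b)" using assms a b by (simp add: unitv_def)
  finally show "(hh N w * hh N w) $$ (a,b) = 1\<^sub>m N $$ (a,b)" .
qed (auto simp: hh_def)

lemma Qr_orth:
  assumes "\<And>j. j < m \<Longrightarrow> unitv N (u j)"
  shows "transpose_mat (Qr N u m) * Qr N u m = 1\<^sub>m N \<and> Qr N u m * transpose_mat (Qr N u m) = 1\<^sub>m N"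
  using assms
proof (induction m)
  case 0
  then show ?case by simp
next
  case (Suc m)
  let ?Q = "Qr N u m" and ?H = "hh N (u m)"
  have Q: "?Q \<in> carrier_mat N N" by (rule Qr_carrier)
  have H: "?H \<in> carrier_mat N N" by (rule hh_carrier)
  have IH: "transpose_mat ?Q * ?Q = 1\<^sub>m N" "?Q * transpose_mat ?Q = 1\<^sub>m N" using Suc by auto
  have HH: "?H * ?H = 1\<^sub>m N" using hh_sq Suc.prems by auto
  have tQ: "transpose_mat ?Q \<in> carrier_mat N N" using Q by simp
  have QH: "?Q * ?H \<in> carrier_mat N N" using Q H by simp
  have "transpose_mat (?Q * ?H) * (?Q * ?H) = (?H * transpose_mat ?Q) * (?Q * ?H)"
    by (simp add: transpose_mult[OF Q H] hh_sym)
  also have "\<dots> = ?H * (transpose_mat ?Q * (?Q * ?H))" using assoc_mult_mat[OF H tQ QH] .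
  also have "transpose_mat ?Q * (?Q * ?H) = (transpose_mat ?Q * ?Q) * ?H"
    using assoc_mult_mat[OF tQ Q H] by simp
  also have "\<dots> = ?H" using IH H by simp
  finally have 1: "transpose_mat (?Q * ?H) * (?Q * ?H) = 1\<^sub>m N" using HH by simp
  have tQH: "?H * transpose_mat ?Q \<in> carrier_mat N N" using H tQ by simp
  have "(?Q * ?H) * transpose_mat (?Q * ?H) = (?Q * ?H) * (?H * transpose_mat ?Q)"
    by (simp add: transpose_mult[OF Q H] hh_sym)
  also have "\<dots> = ?Q * (?H * (?H * transpose_mat ?Q))" using assoc_mult_mat[OF Q H tQH] .
  also have "?H * (?H * transpose_mat ?Q) = (?H * ?H) * transpose_mat ?Q"
    using assoc_mult_mat[OF H H tQ] by simp
  also have "\<dots> = transpose_mat ?Q" using HH tQ by simp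
  finally have 2: "(?Q * ?H) * transpose_mat (?Q * ?H) = 1\<^sub>m N" using IH by simp
  show ?case using 1 2 by simp
qed

lemma nu_unit:
  assumes "v j \<in> carrier_vec N" "v j \<noteq> 0\<^sub>v N"
  shows "unitv N (nu N v j)"
proof -
  let ?s = "(\<Sum>c<N. v j $ c * v j $ c)"
  have vv: "v j \<bullet> v j = ?s" using assms by (simp add: scalar_prod_def lessThan_atLeast0)
  obtain c where c: "c < N" "v j $ c \<noteq> 0" using assms by (metis eq_vecI carrier_vecD index_zero_vec)
  have "?s > 0"
    by (rule sum_pos2[of "{..<N}" c]) (use c in \<open>auto simp: zero_less_mult_iff\<close>)
  then have n: "vnorm (v j) ^ 2 = ?s" "vnorm (v j) > 0" using vv by (auto simp: vnorm_def)
  have "(\<Sum>c<N. nu N v j $ c * nu N v j $ c) = (\<Sum>c<N. v j $ c * v j $ c) / vnorm (v j) ^ 2"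
    by (simp add: nu_def sum_divide_distrib power2_eq_square)
  also have "\<dots> = 1" using n \<open>?s > 0\<close> by simp
  finally show ?thesis by (simp add: unitv_def nu_def)
qed

lemma gamma_stiefel:
  assumes MN: "M \<le> N" and v: "valid_tuple N M v"
  shows "gamma N M v \<in> stiefel N M"
proof -
  let ?Q = "Qr N (nu N v) M"
  have orth: "transpose_mat ?Q * ?Q = 1\<^sub>m N"
    using Qr_orth[of M N "nu N v"] nu_unit v by (auto simp: valid_tuple_def)
  have "transpose_mat (gamma N M v) * gamma N M v = 1\<^sub>m M"
  proof (rule eq_matI)
    fix k l assume "k < dim_row (1\<^sub>m M :: real mat)" "l < dim_col (1\<^sub>m M :: real mat)"
    then have k: "k < M" and l: "l < M" by auto
    have "(transpose_mat (gamma N M v) * gamma N M v) $$ (k,l) = (transpose_mat ?Q * ?Q) $$ (k,l)"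
      using k l MN Qr_carrier[of N "nu N v" M]
      by (simp add: gamma_eq[OF MN] scalar_prod_def carrier_matD)
    then show "(transpose_mat (gamma N M v) * gamma N M v) $$ (k,l) = 1\<^sub>m M $$ (k,l)"
      using orth k l MN by simp
  qed (auto simp: gamma_eq[OF MN])
  then show ?thesis by (simp add: stiefel_def gamma_eq[OF MN])
qed

lemma Qr_cong: "(\<And>j. j < m \<Longrightarrow> u j = u' j) \<Longrightarrow> Qr N u m = Qr N u' m"
  by (induction m) auto

lemma stiefel_index:
  assumes "\<Omega> \<in> stiefel N M" "i < M" "l < M"
  shows "(\<Sum>a<N. \<Omega> $$ (a,i) * \<Omega> $$ (a,l)) = (if i = l then 1 else 0)"
proof -
  have C: "\<Omega> \<in> carrier_mat N M" and E: "transpose_mat \<Omega> * \<Omega> = 1\<^sub>m M"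
    using assms by (auto simp: stiefel_def)
  have "(transpose_mat \<Omega> * \<Omega>) $$ (i,l) = (\<Sum>a<N. \<Omega> $$ (a,i) * \<Omega> $$ (a,l))"
    using C assms by (simp add: scalar_prod_def lessThan_atLeast0 carrier_matD)
  then show ?thesis using E assms by simp
qed

lemma QQt_index:
  assumes "\<And>j. j < m \<Longrightarrow> unitv N (u j)" "a < N" "b < N"
  shows "(\<Sum>c<N. Qr N u m $$ (a,c) * Qr N u m $$ (b,c)) = (if a = b then 1 else 0)"
proof -
  have C: "Qr N u m \<in> carrier_mat N N" by (rule Qr_carrier)
  have E: "Qr N u m * transpose_mat (Qr N u m) = 1\<^sub>m N" using Qr_orth assms by blast
  have "(Qr N u m * transpose_mat (Qr N u m)) $$ (a,b) = (\<Sum>c<N. Qr N u m $$ (a,c) * Qr N u m $$ (b,c))"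
    using C assms by (simp add: scalar_prod_def lessThan_atLeast0 carrier_matD)
  then show ?thesis using E assms by simp
qed

lemma surj_step:
  assumes mM: "m < M" and MN: "M < N" and Om: "\<Omega> \<in> stiefel N M"
    and un: "\<And>j. j < m \<Longrightarrow> unitv N (u j)"
    and eq: "\<And>k a. k < m \<Longrightarrow> a < N \<Longrightarrow> Qr N u m $$ (a,k) = \<Omega> $$ (a,k)"
  shows "\<exists>w. unitv N w \<and> (\<forall>k<Suc m. \<forall>a<N. Qr N (u(m:=w)) (Suc m) $$ (a,k) = \<Omega> $$ (a,k))"
proof -
  let ?Q = "Qr N u m"
  define xs where "xs c = (\<Sum>b<N. ?Q $$ (b,c) * \<Omega> $$ (b,m))" for c
  have F3: "(\<Sum>c<N. ?Q $$ (a,c) * xs c) = \<Omega> $$ (a,m)" if a: "a < N" for a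
  proof -
    have "(\<Sum>c<N. ?Q $$ (a,c) * xs c) = (\<Sum>b<N. (\<Sum>c<N. ?Q $$ (a,c) * ?Q $$ (b,c)) * \<Omega> $$ (b,m))"
      unfolding xs_def sum_distrib_left sum_distrib_right
      by (subst sum.swap) (simp add: algebra_simps)
    also have "\<dots> = (\<Sum>b<N. (if b = a then \<Omega> $$ (b,m) else 0))"
      using QQt_index[OF un a] by (intro sum.cong) auto
    also have "\<dots> = \<Omega> $$ (a,m)" using a by simp
    finally show ?thesis .
  qed
  have F4: "(\<Sum>c<N. xs c * xs c) = 1"
  proof -
    have "(\<Sum>c<N. xs c * xs c) = (\<Sum>b<N. \<Omega> $$ (b,m) * (\<Sum>c<N. ?Q $$ (b,c) * xs c))"
      unfolding xs_def sum_distrib_left sum_distrib_right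
      by (subst sum.swap) (simp add: algebra_simps)
    also have "\<dots> = (\<Sum>b<N. \<Omega> $$ (b,m) * \<Omega> $$ (b,m))" using F3 by simp
    also have "\<dots> = 1" using stiefel_index[OF Om mM mM] by simp
    finally show ?thesis .
  qed
  have F5: "xs i = 0" if i: "i < m" for i
  proof -
    have "xs i = (\<Sum>b<N. \<Omega> $$ (b,i) * \<Omega> $$ (b,m))" unfolding xs_def using eq i by simp
    also have "\<dots> = 0" using stiefel_index[OF Om _ mM, of i] i mM by simp
    finally show ?thesis .
  qed
  have key: "\<exists>w. unitv N w \<and> (\<forall>c<N. \<forall>k\<le>m. hh N w $$ (c,k) = (if k < m then (if c = k then 1 else 0) else xs c))"
  proof (cases "\<forall>c<N. xs c = (if c = m then 1 else 0)")
    case True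
    let ?w = "unit_vec N (N - 1) :: real vec"
    have "unitv N ?w"
    proof -
      have "(\<Sum>c<N. ?w $ c * ?w $ c) = (\<Sum>c<N. if c = N - 1 then 1 else 0)"
        by (intro sum.cong) (auto simp: unit_vec_def)
      then show ?thesis using MN by (simp add: unitv_def)
    qed
    moreover have "hh N ?w $$ (c,k) = (if k < m then (if c = k then 1 else 0) else xs c)"
      if "c < N" "k \<le> m" for c k
      using that True mM MN by (auto simp: hh_def unit_vec_def)
    ultimately show ?thesis by blast
  next
    case False
    define D where "D = (\<Sum>c<N. (xs c - (if c = m then 1 else 0))^2)"
    have mN: "m < N" using mM MN by simp
    have D2: "D = 2 - 2 * xs m"
    proof -
      have "D = (\<Sum>c<N. xs c * xs c) - (\<Sum>c<N. if c = m then 2 * xs c else 0) + (\<Sum>c<N. if c = m then 1 else 0)"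
      proof -
        have "\<And>c. (xs c - (if c = m then 1 else 0))^2 = xs c * xs c - (if c = m then 2 * xs c else 0) + (if c = m then 1 else 0)"
          by (auto simp: power2_eq_square algebra_simps)
        then show ?thesis unfolding D_def by (simp only: sum.distrib sum_subtractf)
      qed
      then show ?thesis using F4 mN by (simp add: sum.delta)
    qed
    have Dpos: "D > 0"
    proof -
      from False obtain c where c: "c < N" "xs c \<noteq> (if c = m then 1 else 0)" by blast
      show ?thesis unfolding D_def
        by (rule sum_pos2[of "{..<N}" c]) (use c in auto)
    qed
    define d where "d = sqrt D"
    have dd: "d * d = D" "d > 0" using Dpos by (auto simp: d_def)
    define w where "w = vec N (\<lambda>c. (xs c - (if c = m then 1 else 0)) / d)"
    have "unitv N w"
    proof -
      have "(\<Sum>c<N. w $ c * w $ c) = D / (d * d)"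
        unfolding D_def w_def by (simp add: sum_divide_distrib power2_eq_square)
      then show ?thesis using dd Dpos by (simp add: unitv_def w_def)
    qed
    moreover have "hh N w $$ (c,k) = (if k < m then (if c = k then 1 else 0) else xs c)"
      if c: "c < N" and k: "k \<le> m" for c k
    proof (cases "k < m")
      case True
      then show ?thesis using c k mN F5[OF True] by (simp add: hh_def w_def)
    next
      case False
      then have km: "k = m" using k by simp
      have "hh N w $$ (c,m) = (if c = m then 1 else 0)
          - 2 * ((xs c - (if c = m then 1 else 0)) / d) * ((xs m - 1) / d)"
        using c mN by (simp add: hh_def w_def)
      also have "\<dots> = (if c = m then 1 else 0)
          - 2 * (xs c - (if c = m then 1 else 0)) * (xs m - 1) / D"
        unfolding dd(1)[symmetric] using dd(2) by (simp add: field_simps)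
      also have "\<dots> = xs c" using Dpos by (simp add: field_simps) (auto simp: D2 algebra_simps)
      finally show ?thesis using km by simp
    qed
    ultimately show ?thesis by blast
  qed
  then obtain w where w: "unitv N w" and wH: "\<And>c k. c < N \<Longrightarrow> k \<le> m \<Longrightarrow> hh N w $$ (c,k) = (if k < m then (if c = k then 1 else 0) else xs c)"
    by blast
  have Qc: "Qr N (u(m:=w)) m = ?Q" by (rule Qr_cong) auto
  have "Qr N (u(m:=w)) (Suc m) $$ (a,k) = \<Omega> $$ (a,k)" if k: "k < Suc m" and a: "a < N" for k a
  proof -
    have kN: "k < N" using k mM MN by simp
    have "Qr N (u(m:=w)) (Suc m) $$ (a,k) = (\<Sum>c<N. ?Q $$ (a,c) * hh N w $$ (c,k))"
      using a kN Qc Qr_carrier[of N u m] by (simp add: scalar_prod_def lessThan_atLeast0 carrier_matD hh_def)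
    also have "\<dots> = (\<Sum>c<N. ?Q $$ (a,c) * (if k < m then (if c = k then 1 else 0) else xs c))"
      using wH k by (intro sum.cong) auto
    also have "\<dots> = \<Omega> $$ (a,k)"
    proof (cases "k < m")
      case True
      have "(\<Sum>c<N. ?Q $$ (a,c) * (if k < m then (if c = k then 1 else 0) else xs c))
          = (\<Sum>c<N. if c = k then ?Q $$ (a,k) else 0)"
        using True by (intro sum.cong) auto
      then show ?thesis using kN eq[OF True a] by simp
    next
      case False
      then have "k = m" using k by simp
      then show ?thesis using F3[OF a] False by simp
    qed
    finally show ?thesis .
  qed
  with w show ?thesis by blast
qed

lemma surj_ind:
  assumes MN: "M < N" and Om: "\<Omega> \<in> stiefel N M"
  shows "m \<le> M \<Longrightarrow> \<exists>u. (\<forall>j<m. unitv N (u j)) \<and> (\<forall>k<m. \<forall>a<N. Qr N u m $$ (a,k) = \<Omega> $$ (a,k))"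
proof (induction m)
  case 0
  then show ?case by simp
next
  case (Suc m)
  then obtain u where un: "\<forall>j<m. unitv N (u j)" and eq: "\<forall>k<m. \<forall>a<N. Qr N u m $$ (a,k) = \<Omega> $$ (a,k)"
    by auto
  from surj_step[of m M N \<Omega> u] Suc.prems MN Om un eq
  obtain w where w: "unitv N w" "\<forall>k<Suc m. \<forall>a<N. Qr N (u(m:=w)) (Suc m) $$ (a,k) = \<Omega> $$ (a,k)"
    by auto
  have "\<forall>j<Suc m. unitv N ((u(m:=w)) j)" using un w(1) by (auto simp: less_Suc_eq)
  with w(2) show ?case by blast
qed

lemma unitv_nu:
  assumes "unitv N w" "j < M"
  shows "nu N (\<lambda>_. w) j = w"
proof -
  have dw: "dim_vec w = N" using assms by (simp add: unitv_def carrier_vecD)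
  have "w \<bullet> w = 1" using assms unfolding scalar_prod_def dw by (simp add: unitv_def lessThan_atLeast0)
  then have "vnorm w = 1" by (simp add: vnorm_def)
  then show ?thesis using assms by (intro eq_vecI) (auto simp: nu_def unitv_def)
qed

theorem theorem3:
  fixes N M :: nat
  assumes "0 < M" and "M < N"
  shows "(\<forall>v. valid_tuple N M v \<longrightarrow> invertible_mat (Smat N M v))
    \<and> (\<forall>v. valid_tuple N M v \<longrightarrow> gamma N M v \<in> stiefel N M)
    \<and> (\<forall>\<Omega> \<in> stiefel N M. \<exists>v. valid_tuple N M v \<and> gamma N M v = \<Omega>)"
proof (intro conjI allI impI ballI)
  fix v show "invertible_mat (Smat N M v)" using Smat_inv by blast
next
  fix v assume "valid_tuple N M v"
  then show "gamma N M v \<in> stiefel N M" using gamma_stiefel assms by simp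
next
  fix \<Omega> assume Om: "\<Omega> \<in> stiefel N M"
  obtain u where un: "\<forall>j<M. unitv N (u j)" and eq: "\<forall>k<M. \<forall>a<N. Qr N u M $$ (a,k) = \<Omega> $$ (a,k)"
    using surj_ind[OF assms(2) Om, of M] by auto
  have nu_eq: "nu N u j = u j" if "j < M" for j
    using unitv_nu[of N "u j" j M] un that by (simp add: nu_def)
  have valid: "valid_tuple N M u"
    unfolding valid_tuple_def
  proof (intro allI impI conjI)
    fix j assume j: "j < M"
    then show "u j \<in> carrier_vec N" using un by (simp add: unitv_def)
    show "u j \<noteq> 0\<^sub>v N"
    proof
      assume "u j = 0\<^sub>v N"
      moreover have "(\<Sum>c<N. u j $ c * u j $ c) = 1" using un j by (simp add: unitv_def)
      ultimately show False by simp
    qed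
  qed
  have Qe: "Qr N (nu N u) M = Qr N u M" by (rule Qr_cong) (simp add: nu_eq)
  have C: "\<Omega> \<in> carrier_mat N M" using Om by (simp add: stiefel_def)
  have "gamma N M u = \<Omega>"
    unfolding gamma_eq[OF less_imp_le[OF assms(2)]] Qe
    by (rule eq_matI) (use C eq in auto)
  with valid show "\<exists>v. valid_tuple N M v \<and> gamma N M v = \<Omega>" by blast
qed

end
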